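(* Consider any tuples $(\lambda ,S_k^\lambda ,F_k^\lambda ,P_k^\lambda )_{k = 0}^{N - 1}$ such that $\lambda>0$ and $C(\{ S_k^\lambda \} _{k = 0}^{N - 1} ) = \gamma$, i.e. elements of \[ \Lambda : = \{ (\lambda ,S_k^\lambda ,F_k^\lambda ,P_k^\lambda )_{k = 0}^{N - 1} :\lambda > 0, C(\{ S_k^\lambda \} _{k = 0}^{N - 1} ) = \gamma \}. \] Then, the corresponding $\{(S_k^\lambda,F_k^\lambda)\}_{k=0}^{N-1}$ with $(\lambda ,S_k^\lambda ,F_k^\lambda ,P_k^\lambda )_{k = 0}^{N - 1} \in \Lambda$ is an optimal solution of the constrained LQG (covariance selection) problem.
   Context: Consider the stochastic LTI system $x(k+1)=Ax(k)+Bu(k)+w(k)$ with $x(k)\in\mathbb R^n$, $u(k)\in\mathbb R^m$, $x(0)\sim\mathcal N(z,V)$, $w(k)\sim\mathcal N(0,W)$ mutually independent, and linear feedback $u(k)=F_kx(k)$, $k\in\{0,\dots,N-1\}$. With $S_k=\mathbb E([x(k);u(k)][x(k);u(k)]^T)$, the constrained LQG (covariance selection) problem is: minimize $J_p(\{S_k\})=\mathrm{Tr}\big(Q_f([A\ B]S_{N-1}[A\ B]^T+W)\big)+\sum_{k=0}^{N-1}\mathrm{Tr}(\mathrm{diag}(Q_k,R_k)S_k)$ over $\{S_k,F_k\}$ subject to $S_k=\Phi(F_k,S_{k-1})$ ($k=1,\dots,N-1$), $S_0=[I_n;F_0](V+zz^T)[I_n;F_0]^T$, and $C(\{S_k\})\le\gamma$,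 where $C(\{S_k\})=\mathrm{Tr}\big(\tilde Q_f([A\ B]S_{N-1}[A\ B]^T+W)\big)+\sum_{k=0}^{N-1}\mathrm{Tr}(\mathrm{diag}(\tilde Q_k,\tilde R_k)S_k)$ and $\Phi(F,S)=[I_n;F]([A\ B]S[A\ B]^T+W)[I_n;F]^T$. Assumptions: $Q_f,\tilde Q_f,Q_k,\tilde Q_k\succeq0$, $R_k+\lambda\tilde R_k\succ0$ for all $k$, $\lambda>0$; $V\succ0$, $W\succ0$; strict feasibility of the inequality constraint; and $C(\{S_k^0\})>\gamma$ (the unconstrained LQG solution violates the constraint). For $\lambda\ge0$, $X_N^\lambda=Q_f+\lambda\tilde Q_f$, $X_k^\lambda=A^TX_{k+1}^\lambda A-A^TX_{k+1}^\lambda B(R_k+\lambda\tilde R_k+B^TX_{k+1}^\lambda B)^{-1}B^TX_{k+1}^\lambda A+Q_k+\lambda\tilde Q_k$, $F_k^\lambda=-(R_k+\lambda\tilde R_k+B^TX_{k+1}^\lambda B)^{-1}B^TX_{k+1}^\lambda A$, $S_0^\lambda=[I;F_0^\lambda](V+zz^T)[I;F_0^\lambda]^T$, $S_k^\lambda=\Phi(F_k^\lambda,S_{k-1}^\lambda)$, $P_k^\lambda=\begin{bmatrix}Q_k+\lambda\tilde Q_k+A^TX_{k+1}^\lambda A & A^TX_{k+1}^\lambda B\\ B^TX_{k+1}^\lambda A & R_k+\lambda\tilde R_k+B^TX_{k+1}^\lambda B\end{bmatrix}$. It was shown that $\Lambda$ is exactly the set of KKT points (with Lagrange multipliers $P_k$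 for the equality constraints and $\lambda$ for the inequality constraint) of this problem, and that if $C(\{S_k^\lambda\})=C(\{S_k^{\lambda+\varepsilon}\})$ then $J_p(\{S_k^\lambda\})=J_p(\{S_k^{\lambda+\varepsilon}\})$. *)

theory Defs
  imports "HOL-Analysis.Analysis"
begin

text \<open>State space indexed by the finite type 'n, input space by 'm; the stacked
  vector [x; u] is indexed by the finite sum type ('n + 'm).\<close>

record ('n, 'm) lqg =
  sA :: "real^'n^'n"
  sB :: "real^'m^'n"
  sW :: "real^'n^'n"
  sV :: "real^'n^'n"
  sz :: "real^'n"
  sN :: nat
  sQf :: "real^'n^'n"
  sQ :: "nat \<Rightarrow> real^'n^'n"
  sR :: "nat \<Rightarrow> real^'m^'m"
  sQtf :: "real^'n^'n"
  sQt :: "nat \<Rightarrow> real^'n^'n"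
  sRt :: "nat \<Rightarrow> real^'m^'m"
  sgamma :: real

definition psd :: "real^'n^'n \<Rightarrow> bool" where
  "psd M \<longleftrightarrow> transpose M = M \<and> (\<forall>x. 0 \<le> x \<bullet> (M *v x))"

definition pd :: "real^'n^'n \<Rightarrow> bool" where
  "pd M \<longleftrightarrow> transpose M = M \<and> (\<forall>x. x \<noteq> 0 \<longrightarrow> 0 < x \<bullet> (M *v x))"

definition outer :: "real^'n \<Rightarrow> real^'n^'n" where
  "outer z = (\<chi> i j. z$i * z$j)"

definition IF :: "real^'n^'m \<Rightarrow> real^'n^('n + 'm)" where
  "IF F = (\<chi> r. case r of Inl i \<Rightarrow> (mat 1 :: real^'n^'n)$i | Inr j \<Rightarrow> F$j)"

definition AB :: "real^'n^'n \<Rightarrow> real^'m^'n \<Rightarrow> real^('n + 'm)^'n" where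
  "AB A B = (\<chi> i c. case c of Inl j \<Rightarrow> A$i$j | Inr j \<Rightarrow> B$i$j)"

definition bdiag :: "real^'n^'n \<Rightarrow> real^'m^'m \<Rightarrow> real^('n + 'm)^('n + 'm)" where
  "bdiag Q R = (\<chi> r c. case (r, c) of (Inl i, Inl j) \<Rightarrow> Q$i$j | (Inr i, Inr j) \<Rightarrow> R$i$j | _ \<Rightarrow> 0)"

definition blk :: "real^'n^'n \<Rightarrow> real^'m^'n \<Rightarrow> real^'n^'m \<Rightarrow> real^'m^'m \<Rightarrow> real^('n + 'm)^('n + 'm)" where
  "blk M11 M12 M21 M22 = (\<chi> r c. case (r, c) of (Inl i, Inl j) \<Rightarrow> M11$i$j | (Inl i, Inr j) \<Rightarrow> M12$i$j
      | (Inr i, Inl j) \<Rightarrow> M21$i$j | (Inr i, Inr j) \<Rightarrow> M22$i$j)"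

definition Phi :: "('n::finite, 'm::finite) lqg \<Rightarrow> real^'n^'m \<Rightarrow> real^('n + 'm)^('n + 'm) \<Rightarrow> real^('n + 'm)^('n + 'm)" where
  "Phi P F S = IF F ** (AB (sA P) (sB P) ** S ** transpose (AB (sA P) (sB P)) + sW P) ** transpose (IF F)"

definition Sinit :: "('n::finite, 'm::finite) lqg \<Rightarrow> real^'n^'m \<Rightarrow> real^('n + 'm)^('n + 'm)" where
  "Sinit P F = IF F ** (sV P + outer (sz P)) ** transpose (IF F)"

definition qcost :: "('n::finite, 'm::finite) lqg \<Rightarrow> real^'n^'n \<Rightarrow> (nat \<Rightarrow> real^'n^'n) \<Rightarrow> (nat \<Rightarrow> real^'m^'m)
    \<Rightarrow> (nat \<Rightarrow> real^('n + 'm)^('n + 'm)) \<Rightarrow> real" where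
  "qcost P Qf Q R S =
     trace (Qf ** (AB (sA P) (sB P) ** S (sN P - 1) ** transpose (AB (sA P) (sB P)) + sW P))
     + (\<Sum>k<sN P. trace (bdiag (Q k) (R k) ** S k))"

definition Jp :: "('n::finite, 'm::finite) lqg \<Rightarrow> (nat \<Rightarrow> real^('n + 'm)^('n + 'm)) \<Rightarrow> real" where
  "Jp P S = qcost P (sQf P) (sQ P) (sR P) S"

definition Ccost :: "('n::finite, 'm::finite) lqg \<Rightarrow> (nat \<Rightarrow> real^('n + 'm)^('n + 'm)) \<Rightarrow> real" where
  "Ccost P S = qcost P (sQtf P) (sQt P) (sRt P) S"

definition dyn_feasible :: "('n::finite, 'm::finite) lqg \<Rightarrow> (nat \<Rightarrow> real^('n + 'm)^('n + 'm)) \<Rightarrow> (nat \<Rightarrow> real^'n^'m) \<Rightarrow> bool" where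
  "dyn_feasible P S F \<longleftrightarrow> S 0 = Sinit P (F 0) \<and>
     (\<forall>k. 1 \<le> k \<and> k < sN P \<longrightarrow> S k = Phi P (F k) (S (k - 1)))"

definition feasible :: "('n::finite, 'm::finite) lqg \<Rightarrow> (nat \<Rightarrow> real^('n + 'm)^('n + 'm)) \<Rightarrow> (nat \<Rightarrow> real^'n^'m) \<Rightarrow> bool" where
  "feasible P S F \<longleftrightarrow> dyn_feasible P S F \<and> Ccost P S \<le> sgamma P"

definition optimal :: "('n::finite, 'm::finite) lqg \<Rightarrow> (nat \<Rightarrow> real^('n + 'm)^('n + 'm)) \<Rightarrow> (nat \<Rightarrow> real^'n^'m) \<Rightarrow> bool" where
  "optimal P S F \<longleftrightarrow> feasible P S F \<and> (\<forall>S' F'. feasible P S' F' \<longrightarrow> Jp P S \<le> Jp P S')"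

text \<open>Riccati recursion, indexed by the number j of steps back from N: Xrev P l j = X^l_{N-j}.\<close>
primrec Xrev :: "('n::finite, 'm::finite) lqg \<Rightarrow> real \<Rightarrow> nat \<Rightarrow> real^'n^'n" where
  "Xrev P l 0 = sQf P + l *\<^sub>R sQtf P"
| "Xrev P l (Suc j) =
     (let X = Xrev P l j; k = sN P - Suc j; A = sA P; B = sB P in
      transpose A ** X ** A
      - transpose A ** X ** B ** matrix_inv (sR P k + l *\<^sub>R sRt P k + transpose B ** X ** B) ** transpose B ** X ** A
      + sQ P k + l *\<^sub>R sQt P k)"

definition Xlam :: "('n::finite, 'm::finite) lqg \<Rightarrow> real \<Rightarrow> nat \<Rightarrow> real^'n^'n" where
  "Xlam P l k = Xrev P l (sN P - k)"

definition Flam :: "('n::finite, 'm::finite) lqg \<Rightarrow> real \<Rightarrow> nat \<Rightarrow> real^'n^'m" where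
  "Flam P l k = - (matrix_inv (sR P k + l *\<^sub>R sRt P k + transpose (sB P) ** Xlam P l (k + 1) ** sB P)
                    ** transpose (sB P) ** Xlam P l (k + 1) ** sA P)"

primrec Slam :: "('n::finite, 'm::finite) lqg \<Rightarrow> real \<Rightarrow> nat \<Rightarrow> real^('n + 'm)^('n + 'm)" where
  "Slam P l 0 = Sinit P (Flam P l 0)"
| "Slam P l (Suc k) = Phi P (Flam P l (Suc k)) (Slam P l k)"

definition Plam :: "('n::finite, 'm::finite) lqg \<Rightarrow> real \<Rightarrow> nat \<Rightarrow> real^('n + 'm)^('n + 'm)" where
  "Plam P l k = (let X = Xlam P l (k + 1); A = sA P; B = sB P in
     blk (sQ P k + l *\<^sub>R sQt P k + transpose A ** X ** A) (transpose A ** X ** B)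
         (transpose B ** X ** A) (sR P k + l *\<^sub>R sRt P k + transpose B ** X ** B))"

end

theory Submission
  imports Defs
begin


definition qf :: "'a set \<Rightarrow> ('a \<Rightarrow> 'a \<Rightarrow> real) \<Rightarrow> ('a \<Rightarrow> real) \<Rightarrow> real" where
  "qf I f x = (\<Sum>i\<in>I. \<Sum>j\<in>I. x i * f i j * x j)"
definition psdon :: "'a set \<Rightarrow> ('a \<Rightarrow> 'a \<Rightarrow> real) \<Rightarrow> bool" where
  "psdon I f \<longleftrightarrow> (\<forall>x. 0 \<le> qf I f x)"
definition frob :: "'a set \<Rightarrow> ('a \<Rightarrow> 'a \<Rightarrow> real) \<Rightarrow> ('a \<Rightarrow> 'a \<Rightarrow> real) \<Rightarrow> real" where
  "frob I g f = (\<Sum>i\<in>I. \<Sum>j\<in>I. g i j * f i j)"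

lemma sum2_insert:
  assumes "finite J" "a \<notin> J"
  shows "(\<Sum>i\<in>insert a J. \<Sum>j\<in>insert a J. h i j) =
    h a a + (\<Sum>j\<in>J. h a j) + (\<Sum>i\<in>J. h i a) + (\<Sum>i\<in>J. \<Sum>j\<in>J. (h i j::real))"
  using assms by (simp add: sum.distrib)

lemma psdon_restrict:
  assumes "finite J" "a \<notin> J" "psdon (insert a J) g"
  shows "psdon J g"
  unfolding psdon_def
proof
  fix x
  have "qf J g x = qf (insert a J) g (x(a:=0))"
    unfolding qf_def using assms(1,2)
    by (simp add: sum2_insert, intro sum.cong refl, auto)
  then show "0 \<le> qf J g x" using assms(3) unfolding psdon_def by simp
qed

lemma zero_row:
  assumes "finite J" "a \<notin> J" "\<forall>j. f a j = 0" "\<forall>j. f j a = 0"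
  shows "qf (insert a J) f x = qf J f x" "frob (insert a J) g f = frob J g f"
  unfolding qf_def frob_def using assms by (simp_all add: sum2_insert)

lemma qf_shift:
  assumes "finite I" "a \<in> I"
  shows "qf I f (\<lambda>i. x i + c * (if i = a then 1 else 0)) =
     qf I f x + c * (\<Sum>j\<in>I. f a j * x j) + c * (\<Sum>i\<in>I. x i * f i a) + c * c * f a a"
proof -
  have e: "(\<lambda>i. x i + c * (if i = a then 1 else 0)) i * f i j * (\<lambda>i. x i + c * (if i = a then 1 else 0)) j
    = x i * f i j * x j + (if i = a then c * f a j * x j else 0) + (if j = a then c * x i * f i a else 0)
      + (if i = a then (if j = a then c * c * f a a else 0) else 0)" for i j
    by (auto simp: algebra_simps)
  have s1: "(\<Sum>i\<in>I. \<Sum>j\<in>I. (if i = a then c * f a j * x j else 0)) = c * (\<Sum>j\<in>I. f a j * x j)"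
    using assms by (subst sum.swap) (simp add: sum_distrib_left mult.assoc)
  have s2: "(\<Sum>i\<in>I. \<Sum>j\<in>I. (if j = a then c * x i * f i a else 0)) = c * (\<Sum>i\<in>I. x i * f i a)"
    using assms by (simp add: sum_distrib_left mult.assoc)
  have s3: "(\<Sum>i\<in>I. \<Sum>j\<in>I. (if i = a then (if j = a then c * c * f a a else 0) else 0)) = c * c * f a a"
    using assms by (subst sum.swap) simp
  show ?thesis
    unfolding qf_def e sum.distrib s1 s2 s3 by simp
qed

lemma qf_delta:
  assumes "finite I" "a \<in> I"
  shows "qf I f (\<lambda>i. if i = a then 1 else 0) = f a a"
proof -
  have z: "qf I f (\<lambda>_. 0) = 0" by (simp add: qf_def)
  show ?thesis using qf_shift[OF assms, of f "\<lambda>_. 0" 1] unfolding z by simp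
qed

lemma frob_nonneg_aux:
  assumes "finite I"
  shows "\<forall>f g. (\<forall>i\<in>I. \<forall>j\<in>I. f i j = f j i) \<longrightarrow> psdon I f \<longrightarrow> psdon I g \<longrightarrow> 0 \<le> frob I g f"
  using assms
proof (induction I rule: finite_induct)
  case empty
  then show ?case by (simp add: frob_def)
next
  case (insert a J)
  show ?case
  proof (intro allI impI)
    fix f g :: "'a \<Rightarrow> 'a \<Rightarrow> real"
    assume sym: "\<forall>i\<in>insert a J. \<forall>j\<in>insert a J. f i j = f j i"
      and pf: "psdon (insert a J) f" and pg: "psdon (insert a J) g"
    let ?I = "insert a J"
    have symI: "f i j = f j i" if "i \<in> ?I" "j \<in> ?I" for i j using sym that by blast
    have fin: "finite ?I" using insert by simp
    have pgJ: "psdon J g" using psdon_restrict[OF insert(1,2) pg] .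
    have b0: "0 \<le> f a a"
      using pf qf_delta[OF fin, of a f] unfolding psdon_def by (metis insertI1)
    show "0 \<le> frob ?I g f"
    proof (cases "f a a = 0")
      case True
      have row0: "f a j = 0" if "j \<in> J" for j
      proof (rule ccontr)
        assume c0: "f a j \<noteq> 0"
        define t where "t = - (f j j + 1) / (2 * f a j)"
        define x where "x = (\<lambda>i. (if i = j then 1 else 0) + t * (if i = a then 1 else 0))"
        have d1: "(\<Sum>j'\<in>?I. f a j' * (if j' = j then 1 else 0)) = f a j"
        proof -
          have "(\<Sum>j'\<in>?I. f a j' * (if j' = j then 1 else 0)) = (\<Sum>j'\<in>?I. if j' = j then f a j else 0)"
            by (intro sum.cong refl) auto
          then show ?thesis using fin that by simp
        qed
        have d2: "(\<Sum>i\<in>?I. (if i = j then 1 else 0) * f i a) = f j a"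
        proof -
          have "(\<Sum>i\<in>?I. (if i = j then 1 else 0) * f i a) = (\<Sum>i\<in>?I. if i = j then f j a else 0)"
            by (intro sum.cong refl) auto
          then show ?thesis using fin that by simp
        qed
        have "qf ?I f x = qf ?I f (\<lambda>i. if i = j then 1 else 0) + t * f a j + t * f j a + t * t * f a a"
          using qf_shift[OF fin insertI1, of f "\<lambda>i. if i = j then 1 else 0" t]
          unfolding d1 d2 x_def .
        also have "qf ?I f (\<lambda>i. if i = j then 1 else 0) = f j j"
          using qf_delta[OF fin, of j f] that by simp
        also have "f j a = f a j" using symI[of j a] that by simp
        finally have "qf ?I f x = f j j + 2 * t * f a j" using True by simp
        also have "\<dots> = -1" unfolding t_def using c0 by (simp add: field_simps)
        finally have "qf ?I f x = -1" .
        moreover have "0 \<le> qf ?I f x" using pf unfolding psdon_def by blast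
        ultimately show False by simp
      qed
      have r0: "\<forall>j. (\<lambda>i j. if i \<in> ?I \<and> j \<in> ?I then f i j else 0) a j = 0"
        using row0 True by auto
      have c0: "\<forall>j. (\<lambda>i j. if i \<in> ?I \<and> j \<in> ?I then f i j else 0) j a = 0"
      proof
        fix j show "(\<lambda>i j. if i \<in> ?I \<and> j \<in> ?I then f i j else 0) j a = 0"
          using row0[of j] True symI[of j a] by (cases "j \<in> ?I") auto
      qed
      let ?h = "(\<lambda>i j. if i \<in> ?I \<and> j \<in> ?I then f i j else 0)"
      have e1: "frob ?I g f = frob ?I g ?h" unfolding frob_def by (intro sum.cong refl) auto
      have e2: "qf ?I f x = qf ?I ?h x" for x unfolding qf_def by (intro sum.cong refl) auto
      have psdh: "psdon J ?h" unfolding psdon_def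
      proof
        fix x
        have "qf J ?h x = qf ?I ?h x" using zero_row(1)[OF insert(1,2) r0 c0] by simp
        then show "0 \<le> qf J ?h x" using pf e2 unfolding psdon_def by simp
      qed
      have "0 \<le> frob J g ?h"
        by (rule insert(3)[rule_format, of ?h g]) (use symI psdh pgJ in simp_all)
      then show ?thesis using e1 zero_row(2)[OF insert(1,2) r0 c0] by simp
    next
      case False
      define b where "b = f a a"
      have bp: "0 < b" using b0 False b_def by simp
      define h where "h = (\<lambda>i j. if i \<in> ?I \<and> j \<in> ?I then f i j - f i a * f a j / b else 0)"
      have r0: "\<forall>j. h a j = 0" and c0: "\<forall>j. h j a = 0"
        using bp by (auto simp: h_def b_def)
      have hsym: "\<forall>i\<in>J. \<forall>j\<in>J. h i j = h j i"
      proof (intro ballI)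
        fix i j assume ij: "i \<in> J" "j \<in> J"
        have "f i j = f j i" "f i a = f a i" "f a j = f j a" using symI ij by auto
        then show "h i j = h j i" using ij by (simp add: h_def)
      qed
      define v where "v = (\<lambda>i. f i a)"
      have split: "frob ?I g f = frob ?I g h + qf ?I g v / b"
      proof -
        have "g i j * f i j = g i j * h i j + v i * g i j * v j / b" if ij: "i \<in> ?I" "j \<in> ?I" for i j
        proof -
          have "f a j = f j a" using symI ij by auto
          then show ?thesis using ij bp by (simp add: h_def v_def field_simps)
        qed
        then show ?thesis
          unfolding frob_def qf_def sum_divide_distrib sum.distrib[symmetric]
          by (intro sum.cong refl) simp
      qed
      have psdh: "psdon J h" unfolding psdon_def
      proof
        fix x
        define s where "s = (\<Sum>j\<in>?I. f a j * x j)"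
        have s2: "(\<Sum>i\<in>?I. x i * f i a) = s" unfolding s_def
        proof (intro sum.cong refl)
          fix i assume "i \<in> ?I" then show "x i * f i a = f a i * x i" using symI[of i a] by simp
        qed
        have "qf ?I h x = qf ?I f x - s * s / b"
        proof -
          have "qf ?I h x = (\<Sum>i\<in>?I. \<Sum>j\<in>?I. x i * f i j * x j - (x i * f i a) * (f a j * x j) / b)"
            unfolding qf_def h_def by (intro sum.cong refl) (simp add: algebra_simps)
          also have "\<dots> = qf ?I f x - (\<Sum>i\<in>?I. x i * f i a) * (\<Sum>j\<in>?I. f a j * x j) / b"
            unfolding qf_def sum_subtractf sum_product sum_divide_distrib by simp
          finally show ?thesis using s2 s_def by simp
        qed
        also have "\<dots> = qf ?I f (\<lambda>i. x i + (- s / b) * (if i = a then 1 else 0))"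
        proof -
          have "qf ?I f (\<lambda>i. x i + (- s / b) * (if i = a then 1 else 0)) =
             qf ?I f x + (- s / b) * s + (- s / b) * s + (- s / b) * (- s / b) * b"
            using qf_shift[OF fin insertI1, of f x "- s / b"] unfolding s2 s_def[symmetric] b_def[symmetric] .
          also have "\<dots> = qf ?I f x - s * s / b" using bp by (simp add: field_simps)
          finally show ?thesis by simp
        qed
        finally have "qf ?I h x = qf ?I f (\<lambda>i. x i + (- s / b) * (if i = a then 1 else 0))" .
        moreover have "0 \<le> qf ?I f (\<lambda>i. x i + (- s / b) * (if i = a then 1 else 0))"
          using pf unfolding psdon_def by blast
        ultimately have "qf ?I h x \<ge> 0" by simp
        then show "0 \<le> qf J h x" using zero_row(1)[OF insert(1,2) r0 c0] by simp
      qed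
      have "0 \<le> frob J g h"
        by (rule insert(3)[rule_format, of h g]) (use hsym psdh pgJ in simp_all)
      moreover have "0 \<le> qf ?I g v / b" using pg bp unfolding psdon_def by simp
      ultimately show ?thesis using split zero_row(2)[OF insert(1,2) r0 c0] by simp
    qed
  qed
qed

lemma psd_psdon:
  fixes A :: "real^'n^'n"
  assumes "psd A"
  shows "psdon UNIV (\<lambda>i j. A$i$j)"
  unfolding psdon_def
proof
  fix x :: "'n \<Rightarrow> real"
  let ?v = "(\<chi> i. x i) :: real^'n"
  have "qf UNIV (\<lambda>i j. A$i$j) x = ?v \<bullet> (A *v ?v)"
    unfolding qf_def inner_vec_def matrix_vector_mult_def
    by (simp add: sum_distrib_left algebra_simps)
  then show "0 \<le> qf UNIV (\<lambda>i j. A$i$j) x" using assms unfolding psd_def by simp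
qed

lemma trace_psd:
  fixes A B :: "real^'n^'n"
  assumes "psd A" "psd B"
  shows "0 \<le> trace (A ** B)"
proof -
  have sB: "B$j$i = B$i$j" for i j
    using assms(2) unfolding psd_def by (metis transpose_def vec_lambda_beta)
  have "trace (A ** B) = frob UNIV (\<lambda>i j. A$i$j) (\<lambda>i j. B$i$j)"
    unfolding trace_def frob_def matrix_matrix_mult_def using sB by simp
  moreover have "0 \<le> frob UNIV (\<lambda>i j. A$i$j) (\<lambda>i j. B$i$j)"
    using frob_nonneg_aux[of "UNIV :: 'n set"] psd_psdon[OF assms(1)] psd_psdon[OF assms(2)] sB
    by simp
  ultimately show ?thesis by simp
qed



lemma transpose_add: "transpose (A + B) = transpose A + (transpose B :: real^'n^'m)"
  by (simp add: transpose_def vec_eq_iff)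

lemma transpose_diff: "transpose (A - B) = transpose A - (transpose B :: real^'n^'m)"
  by (simp add: transpose_def vec_eq_iff)

lemma transpose_uminus: "transpose (- A) = - (transpose A :: real^'n^'m)"
  by (simp add: transpose_def vec_eq_iff)

lemma scaleR_mv: "(c *\<^sub>R A) *v x = c *\<^sub>R (A *v (x::real^'n) :: real^'m)"
  by (simp add: vec_eq_iff matrix_vector_mult_def sum_distrib_left algebra_simps)

lemma trace_scaleR: "trace (c *\<^sub>R (A::real^'n^'n)) = c * trace A"
  by (simp add: trace_def sum_distrib_left)

lemma psd_add: "psd A \<Longrightarrow> psd B \<Longrightarrow> psd (A + B)"
  unfolding psd_def by (simp add: transpose_add matrix_vector_mult_add_rdistrib inner_add_right add_nonneg_nonneg)

lemma psd_scale: "0 \<le> c \<Longrightarrow> psd A \<Longrightarrow> psd (c *\<^sub>R A)"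
  unfolding psd_def by (simp add: transpose_scalar scaleR_mv)

lemma pd_psd: "pd A \<Longrightarrow> psd A"
  unfolding pd_def psd_def by (metis inner_zero_left matrix_vector_mult_0_right order.refl less_imp_le)

lemma pd_add_psd: "pd A \<Longrightarrow> psd B \<Longrightarrow> pd (A + B)"
  unfolding psd_def pd_def
  by (simp add: transpose_add matrix_vector_mult_add_rdistrib inner_add_right add_pos_nonneg)

lemma dot_mv: "(x::real^'k) \<bullet> (C *v y) = (transpose C *v x) \<bullet> (y::real^'n)"
  by (simp add: dot_lmul_matrix)

lemma quad_congr:
  fixes C :: "real^'n^'k" and M :: "real^'n^'n"
  shows "x \<bullet> ((C ** M ** transpose C) *v x) = (transpose C *v x) \<bullet> (M *v (transpose C *v x))"
proof -
  have "(C ** M ** transpose C) *v x = C *v (M *v (transpose C *v x))"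
    by (metis matrix_vector_mul_assoc)
  then show ?thesis by (simp only: dot_mv)
qed

lemma psd_congr:
  fixes C :: "real^'n^'k" and M :: "real^'n^'n"
  assumes "psd M" shows "psd (C ** M ** transpose C)"
  using assms unfolding psd_def
  by (simp add: quad_congr matrix_transpose_mul matrix_mul_assoc)

lemma psd_congrT:
  fixes C :: "real^'k^'n" and M :: "real^'n^'n"
  assumes "psd M" shows "psd (transpose C ** M ** C)"
  using psd_congr[OF assms, of "transpose C"] by simp

lemma psd_outer: "psd (outer z)"
proof -
  have "x \<bullet> (outer z *v x) = (z \<bullet> x) * (z \<bullet> x)" for x
    unfolding outer_def inner_vec_def matrix_vector_mult_def
    by (simp add: sum_distrib_left sum_distrib_right algebra_simps sum_product)
  then show ?thesis unfolding psd_def outer_def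
    by (simp add: transpose_def vec_eq_iff mult.commute)
qed

lemma pd_invertible:
  fixes M :: "real^'n^'n"
  assumes "pd M" shows "invertible M"
proof -
  have "\<forall>x. M *v x = 0 \<longrightarrow> x = 0"
    using assms unfolding pd_def by (metis inner_zero_right less_irrefl)
  then show ?thesis
    unfolding invertible_left_inverse matrix_left_invertible_ker[symmetric] by blast
qed

lemma matrix_inv_props:
  fixes M :: "real^'n^'n"
  assumes "invertible M"
  shows "M ** matrix_inv M = mat 1" "matrix_inv M ** M = mat 1"
proof -
  have "\<exists>A'. M ** A' = mat 1 \<and> A' ** M = mat 1" using assms unfolding invertible_def by blast
  then have "M ** matrix_inv M = mat 1 \<and> matrix_inv M ** M = mat 1"
    unfolding matrix_inv_def by (rule someI_ex)
  then show "M ** matrix_inv M = mat 1" "matrix_inv M ** M = mat 1" by auto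
qed

lemma matrix_inv_sym:
  fixes M :: "real^'n^'n"
  assumes "invertible M" "transpose M = M"
  shows "transpose (matrix_inv M) = matrix_inv M"
proof -
  have "transpose (matrix_inv M) ** M = mat 1"
    using matrix_inv_props(1)[OF assms(1)] assms(2)
    by (metis matrix_transpose_mul transpose_mat)
  then have "transpose (matrix_inv M) = transpose (matrix_inv M) ** (M ** matrix_inv M)"
    using matrix_inv_props(1)[OF assms(1)] by simp
  also have "\<dots> = matrix_inv M"
    by (simp add: matrix_mul_assoc \<open>transpose (matrix_inv M) ** M = mat 1\<close>)
  finally show ?thesis .
qed

lemma sum_UNIV_Plus: "(\<Sum>r\<in>(UNIV::('a::finite + 'b::finite) set). f r) = (\<Sum>i\<in>UNIV. f (Inl i)) + (\<Sum>j\<in>UNIV. f (Inr j))"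
  by (subst UNIV_Plus_UNIV[symmetric], subst sum.Plus) (simp_all add: o_def)

lemma bdiag_AB:
  "bdiag Q R + transpose (AB A B) ** X ** AB A B =
   blk (Q + transpose A ** X ** A) (transpose A ** X ** B) (transpose B ** X ** A) (R + transpose B ** X ** B)"
  by (auto simp: vec_eq_iff bdiag_def blk_def AB_def matrix_matrix_mult_def transpose_def split: sum.split)

lemma bdiag_lin:
  "bdiag (Q + l *\<^sub>R Q') (R + l *\<^sub>R R') = bdiag Q R + l *\<^sub>R bdiag Q' R'"
  by (auto simp: vec_eq_iff bdiag_def split: sum.split)

lemma sum_delta_mult:
  "(\<Sum>k\<in>UNIV. (if k = i then 1 else 0) * (g (k::'a::finite)::real)) = g i"
  "(\<Sum>k\<in>UNIV. (if i = k then 1 else 0) * (g (k::'a::finite)::real)) = g i"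
  "(\<Sum>k\<in>UNIV. (g (k::'a::finite)::real) * (if k = i then 1 else 0)) = g i"
  "(\<Sum>k\<in>UNIV. (g (k::'a::finite)::real) * (if i = k then 1 else 0)) = g i"
proof -
  have "(\<Sum>k\<in>UNIV. (if k = i then 1 else 0) * (g (k::'a::finite)::real)) = (\<Sum>k\<in>UNIV. if k = i then g i else 0)"
    by (intro sum.cong) auto
  then show "(\<Sum>k\<in>UNIV. (if k = i then 1 else 0) * (g (k::'a::finite)::real)) = g i" by simp
  have "(\<Sum>k\<in>UNIV. (if i = k then 1 else 0) * (g (k::'a::finite)::real)) = (\<Sum>k\<in>UNIV. if i = k then g i else 0)"
    by (intro sum.cong) auto
  then show "(\<Sum>k\<in>UNIV. (if i = k then 1 else 0) * (g (k::'a::finite)::real)) = g i" by simp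
  have "(\<Sum>k\<in>UNIV. (g (k::'a::finite)::real) * (if k = i then 1 else 0)) = (\<Sum>k\<in>UNIV. if k = i then g i else 0)"
    by (intro sum.cong) auto
  then show "(\<Sum>k\<in>UNIV. (g (k::'a::finite)::real) * (if k = i then 1 else 0)) = g i" by simp
  have "(\<Sum>k\<in>UNIV. (g (k::'a::finite)::real) * (if i = k then 1 else 0)) = (\<Sum>k\<in>UNIV. if i = k then g i else 0)"
    by (intro sum.cong) auto
  then show "(\<Sum>k\<in>UNIV. (g (k::'a::finite)::real) * (if i = k then 1 else 0)) = g i" by simp
qed

lemma blk_IF:
  "blk M11 M12 M21 M22 ** IF F = (\<chi> r c. case r of Inl i \<Rightarrow> (M11 + M12 ** F)$i$c | Inr j \<Rightarrow> (M21 + M22 ** F)$j$c)"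
  by (auto simp: vec_eq_iff blk_def IF_def matrix_matrix_mult_def sum_UNIV_Plus mat_def
     sum_delta_mult split: sum.split)

lemma IF_T_mult:
  "transpose (IF F) ** (\<chi> r c. case r of Inl i \<Rightarrow> Y1$i$c | Inr j \<Rightarrow> Y2$j$c) = Y1 + transpose F ** Y2"
  by (auto simp: vec_eq_iff IF_def matrix_matrix_mult_def sum_UNIV_Plus mat_def transpose_def
     sum_delta_mult split: sum.split)

lemma IF_blk:
  "transpose (IF F) ** blk M11 M12 M21 M22 ** IF F = M11 + M12 ** F + transpose F ** M21 + transpose F ** M22 ** F"
proof -
  have "transpose (IF F) ** blk M11 M12 M21 M22 ** IF F = transpose (IF F) ** (blk M11 M12 M21 M22 ** IF F)"
    by (simp add: matrix_mul_assoc)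
  also have "\<dots> = (M11 + M12 ** F) + transpose F ** (M21 + M22 ** F)"
    unfolding blk_IF IF_T_mult ..
  finally show ?thesis by (simp add: matrix_add_ldistrib matrix_mul_assoc add.assoc)
qed



lemma matrix_sub_ldistrib': "(A::real^'n^'m) ** (B - C) = A ** B - A ** (C::real^'p^'n)"
  by (simp add: vec_eq_iff matrix_matrix_mult_def sum_subtractf algebra_simps)

lemma matrix_sub_rdistrib': "((B::real^'n^'m) - C) ** (A::real^'p^'n) = B ** A - C ** A"
  by (simp add: vec_eq_iff matrix_matrix_mult_def sum_subtractf algebra_simps)

lemma matrix_add_rdistrib: "((B::real^'n^'m) + C) ** (A::real^'p^'n) = B ** A + C ** A"
  by (simp add: vec_eq_iff matrix_matrix_mult_def sum.distrib algebra_simps)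

lemma matrix_uminus_l: "(- (B::real^'n^'m)) ** (A::real^'p^'n) = - (B ** A)"
  by (simp add: vec_eq_iff matrix_matrix_mult_def sum_negf)

lemma matrix_uminus_r: "(B::real^'n^'m) ** (- (A::real^'p^'n)) = - (B ** A)"
  by (simp add: vec_eq_iff matrix_matrix_mult_def sum_negf)

lemma complete_sq:
  fixes M Mi :: "real^'m^'m" and G :: "real^'n^'m" and M11 :: "real^'n^'n" and F :: "real^'n^'m"
  assumes inv: "M ** Mi = mat 1" "Mi ** M = mat 1" "transpose Mi = Mi"
  shows "M11 + transpose G ** F + transpose F ** G + transpose F ** M ** F =
     (M11 - transpose G ** Mi ** G) + transpose (F - - (Mi ** G)) ** M ** (F - - (Mi ** G))"
proof -
  have c1: "M ** (Mi ** X) = X" for X :: "real^'p^'m" by (simp add: matrix_mul_assoc inv)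
  have T: "transpose (F - - (Mi ** G)) = transpose F + transpose G ** Mi"
    by (simp add: transpose_add matrix_transpose_mul inv)
  have "transpose (F - - (Mi ** G)) ** M ** (F - - (Mi ** G)) =
     transpose F ** (M ** F) + transpose F ** G + transpose G ** F + transpose G ** (Mi ** G)"
    unfolding T
    by (simp add: matrix_add_ldistrib matrix_add_rdistrib matrix_mul_assoc[symmetric] c1 inv
       del: matrix_mul_lid)
  then show ?thesis
    by (simp add: matrix_mul_assoc)
qed

lemma step_identity:
  fixes A X1 W Sg Qk :: "real^'n^'n" and B :: "real^'m^'n" and Rk :: "real^'m^'m" and F :: "real^'n^'m"
  assumes X1sym: "transpose X1 = X1"
    and Minv: "invertible (Rk + transpose B ** X1 ** B)"
    and Msym: "transpose (Rk + transpose B ** X1 ** B) = Rk + transpose B ** X1 ** B"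
  shows "trace (bdiag Qk Rk ** (IF F ** Sg ** transpose (IF F)))
        + trace (X1 ** (AB A B ** (IF F ** Sg ** transpose (IF F)) ** transpose (AB A B) + W))
     = trace ((transpose A ** X1 ** A - transpose A ** X1 ** B ** matrix_inv (Rk + transpose B ** X1 ** B) ** transpose B ** X1 ** A + Qk) ** Sg)
       + trace (X1 ** W)
       + trace (transpose (F - - (matrix_inv (Rk + transpose B ** X1 ** B) ** transpose B ** X1 ** A)) ** (Rk + transpose B ** X1 ** B)
                ** (F - - (matrix_inv (Rk + transpose B ** X1 ** B) ** transpose B ** X1 ** A)) ** Sg)"
proof -
  define M where "M = Rk + transpose B ** X1 ** B"
  define Mi where "Mi = matrix_inv M"
  define G where "G = transpose B ** X1 ** A"
  define S where "S = IF F ** Sg ** transpose (IF F)"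
  have inv: "M ** Mi = mat 1" "Mi ** M = mat 1" "transpose Mi = Mi"
    using matrix_inv_props[OF Minv] matrix_inv_sym[OF Minv Msym] unfolding M_def Mi_def by auto
  have GT: "transpose G = transpose A ** X1 ** B"
    by (simp add: G_def matrix_transpose_mul X1sym matrix_mul_assoc)
  have t1: "trace (X1 ** (AB A B ** S ** transpose (AB A B))) = trace (transpose (AB A B) ** X1 ** AB A B ** S)"
  proof -
    have "trace (X1 ** (AB A B ** S ** transpose (AB A B))) = trace ((X1 ** AB A B ** S) ** transpose (AB A B))"
      by (simp add: matrix_mul_assoc)
    also have "\<dots> = trace (transpose (AB A B) ** (X1 ** AB A B ** S))" by (rule trace_mul_sym)
    finally show ?thesis by (simp add: matrix_mul_assoc)
  qed
  have t2: "trace (blk (Qk + transpose A ** X1 ** A) (transpose A ** X1 ** B) (transpose B ** X1 ** A) M ** S)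
      = trace ((transpose (IF F) ** blk (Qk + transpose A ** X1 ** A) (transpose A ** X1 ** B) (transpose B ** X1 ** A) M ** IF F) ** Sg)"
  proof -
    let ?K = "blk (Qk + transpose A ** X1 ** A) (transpose A ** X1 ** B) (transpose B ** X1 ** A) M"
    have "trace (?K ** S) = trace ((?K ** IF F ** Sg) ** transpose (IF F))"
      by (simp add: S_def matrix_mul_assoc)
    also have "\<dots> = trace (transpose (IF F) ** (?K ** IF F ** Sg))" by (rule trace_mul_sym)
    finally show ?thesis by (simp add: matrix_mul_assoc)
  qed
  have blkeq: "transpose (IF F) ** blk (Qk + transpose A ** X1 ** A) (transpose A ** X1 ** B) (transpose B ** X1 ** A) M ** IF F
     = (Qk + transpose A ** X1 ** A - transpose G ** Mi ** G) + transpose (F - - (Mi ** G)) ** M ** (F - - (Mi ** G))"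
    unfolding IF_blk complete_sq[OF inv, symmetric] GT[symmetric] G_def[symmetric] ..
  have xk: "Qk + transpose A ** X1 ** A - transpose G ** Mi ** G =
     transpose A ** X1 ** A - transpose A ** X1 ** B ** Mi ** transpose B ** X1 ** A + Qk"
    unfolding GT by (simp add: G_def matrix_mul_assoc)
  have fs: "Mi ** G = Mi ** transpose B ** X1 ** A" by (simp add: G_def matrix_mul_assoc)
  have "trace (bdiag Qk Rk ** S) + trace (X1 ** (AB A B ** S ** transpose (AB A B) + W))
      = trace ((bdiag Qk Rk + transpose (AB A B) ** X1 ** AB A B) ** S) + trace (X1 ** W)"
    by (simp add: matrix_add_ldistrib matrix_add_rdistrib trace_add t1)
  also have "\<dots> = trace ((transpose A ** X1 ** A - transpose A ** X1 ** B ** Mi ** transpose B ** X1 ** A + Qk) ** Sg)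
       + trace (X1 ** W) + trace (transpose (F - - (Mi ** transpose B ** X1 ** A)) ** M ** (F - - (Mi ** transpose B ** X1 ** A)) ** Sg)"
    unfolding bdiag_AB M_def[symmetric] t2 blkeq xk fs
    by (simp add: matrix_add_rdistrib trace_add)
  finally show ?thesis unfolding S_def M_def Mi_def .
qed



lemma transpose_zero: "transpose (0::real^'n^'m) = 0"
  by (simp add: transpose_def vec_eq_iff)

lemma trace_zero: "trace (0::real^'n^'n) = 0"
  by (simp add: trace_def)

lemma psd_bdiag:
  assumes "psd Q" "psd R"
  shows "psd (bdiag Q R)"
proof -
  have sQ: "Q$j$i = Q$i$j" for i j using assms(1) unfolding psd_def by (metis transpose_def vec_lambda_beta)
  have sR: "R$j$i = R$i$j" for i j using assms(2) unfolding psd_def by (metis transpose_def vec_lambda_beta)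
  have "x \<bullet> (bdiag Q R *v x) = (\<chi> i. x $ Inl i) \<bullet> (Q *v (\<chi> i. x $ Inl i)) + (\<chi> i. x $ Inr i) \<bullet> (R *v (\<chi> i. x $ Inr i))" for x
    by (simp add: inner_vec_def matrix_vector_mult_def bdiag_def sum_UNIV_Plus)
  moreover have "transpose (bdiag Q R) = bdiag Q R"
    by (auto simp: vec_eq_iff transpose_def bdiag_def sQ sR split: sum.split)
  ultimately show ?thesis using assms unfolding psd_def by (simp add: add_nonneg_nonneg)
qed

lemma ric_psd:
  fixes A X Qk :: "real^'n^'n" and B :: "real^'m^'n" and Rk :: "real^'m^'m"
  assumes X: "psd X" and Q: "psd Qk" and R: "pd Rk"
  shows "pd (Rk + transpose B ** X ** B)"
    "psd (transpose A ** X ** A - transpose A ** X ** B ** matrix_inv (Rk + transpose B ** X ** B) ** transpose B ** X ** A + Qk)"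
proof -
  show pdM: "pd (Rk + transpose B ** X ** B)" using pd_add_psd[OF R psd_congrT[OF X]] .
  define M where "M = Rk + transpose B ** X ** B"
  define Mi where "Mi = matrix_inv M"
  define G where "G = transpose B ** X ** A"
  define Fs where "Fs = - (Mi ** G)"
  have Minv: "invertible M" using pd_invertible pdM M_def by simp
  have Msym: "transpose M = M" using pdM unfolding M_def pd_def by blast
  have Xsym: "transpose X = X" using X unfolding psd_def by blast
  have inv: "M ** Mi = mat 1" "Mi ** M = mat 1" "transpose Mi = Mi"
    using matrix_inv_props[OF Minv] matrix_inv_sym[OF Minv Msym] unfolding Mi_def by auto
  have GT: "transpose G = transpose A ** X ** B"
    by (simp add: G_def matrix_transpose_mul Xsym matrix_mul_assoc)
  have "transpose (IF Fs) ** (bdiag Qk Rk + transpose (AB A B) ** X ** AB A B) ** IF Fs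
     = (Qk + transpose A ** X ** A - transpose G ** Mi ** G) + transpose (Fs - - (Mi ** G)) ** M ** (Fs - - (Mi ** G))"
    unfolding bdiag_AB IF_blk M_def[symmetric] GT[symmetric] G_def[symmetric] by (rule complete_sq[OF inv])
  also have "\<dots> = transpose A ** X ** A - transpose A ** X ** B ** Mi ** transpose B ** X ** A + Qk"
    unfolding GT Fs_def by (simp add: G_def matrix_mul_assoc transpose_zero)
  finally have eq: "transpose (IF Fs) ** (bdiag Qk Rk + transpose (AB A B) ** X ** AB A B) ** IF Fs
     = transpose A ** X ** A - transpose A ** X ** B ** Mi ** transpose B ** X ** A + Qk" .
  have "psd (bdiag Qk Rk + transpose (AB A B) ** X ** AB A B)"
    by (rule psd_add[OF psd_bdiag[OF Q pd_psd[OF R]] psd_congrT[OF X]])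
  from psd_congrT[OF this, of "IF Fs"] show "psd (transpose A ** X ** A - transpose A ** X ** B ** matrix_inv (Rk + transpose B ** X ** B) ** transpose B ** X ** A + Qk)"
    unfolding eq Mi_def M_def .
qed



lemma Xlam_step:
  assumes "k < sN P"
  shows "Xlam P l k = transpose (sA P) ** Xlam P l (Suc k) ** sA P
    - transpose (sA P) ** Xlam P l (Suc k) ** sB P ** matrix_inv (sR P k + l *\<^sub>R sRt P k + transpose (sB P) ** Xlam P l (Suc k) ** sB P) ** transpose (sB P) ** Xlam P l (Suc k) ** sA P
    + (sQ P k + l *\<^sub>R sQt P k)"
proof -
  have e1: "sN P - k = Suc (sN P - Suc k)" and e2: "sN P - Suc (sN P - Suc k) = k" using assms by auto
  show ?thesis unfolding Xlam_def e1 Xrev.simps Let_def e2 by (simp add: add.assoc)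
qed

lemma Xlam_N: "Xlam P l (sN P) = sQf P + l *\<^sub>R sQtf P"
  by (simp add: Xlam_def)

lemma Xlam_psd:
  assumes "psd (sQf P)" "psd (sQtf P)" "\<forall>k < sN P. psd (sQ P k)" "\<forall>k < sN P. psd (sQt P k)"
    "\<forall>k < sN P. \<forall>\<mu> > 0. pd (sR P k + \<mu> *\<^sub>R sRt P k)" "0 < l"
  shows "k \<le> sN P \<Longrightarrow> psd (Xlam P l k)"
proof -
  have "j \<le> sN P \<Longrightarrow> psd (Xlam P l (sN P - j))" for j
  proof (induction j)
    case 0
    then show ?case using assms by (simp add: Xlam_N psd_add psd_scale)
  next
    case (Suc j)
    define k where "k = sN P - Suc j"
    have k: "k < sN P" "Suc k = sN P - j" using Suc.prems k_def by auto
    have X: "psd (Xlam P l (Suc k))" using Suc k by simp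
    have Q: "psd (sQ P k + l *\<^sub>R sQt P k)" using assms k by (simp add: psd_add psd_scale)
    have R: "pd (sR P k + l *\<^sub>R sRt P k)" using assms k by simp
    show ?case unfolding k_def[symmetric] Xlam_step[OF k(1)] by (rule ric_psd(2)[OF X Q R])
  qed
  then show "k \<le> sN P \<Longrightarrow> psd (Xlam P l k)" by (metis diff_diff_cancel diff_le_self)
qed

lemma dyn_feas_Slam: "dyn_feasible P (Slam P l) (Flam P l)"
  unfolding dyn_feasible_def
proof (intro conjI allI impI)
  fix k assume "1 \<le> k \<and> k < sN P"
  then obtain k' where "k = Suc k'" by (cases k) auto
  then show "Slam P l k = Phi P (Flam P l k) (Slam P l (k - 1))" by simp
qed simp

lemma qcost_lin:
  "qcost P (Qf + l *\<^sub>R Qf') (\<lambda>k. Q k + l *\<^sub>R Q' k) (\<lambda>k. R k + l *\<^sub>R R' k) S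
   = qcost P Qf Q R S + l * qcost P Qf' Q' R' S"
  unfolding qcost_def bdiag_lin
  by (simp add: matrix_add_rdistrib trace_add scalar_matrix_assoc[symmetric] trace_scaleR
      sum.distrib sum_distrib_left algebra_simps)

lemma cost_decomp:
  fixes P :: "('n::finite, 'm::finite) lqg"
  assumes N: "0 < sN P"
    and hyp: "psd (sQf P)" "psd (sQtf P)" "\<forall>k < sN P. psd (sQ P k)" "\<forall>k < sN P. psd (sQt P k)"
    "\<forall>k < sN P. \<forall>\<mu> > 0. pd (sR P k + \<mu> *\<^sub>R sRt P k)" "0 < l"
    and V: "pd (sV P)" and W: "pd (sW P)"
    and feas: "dyn_feasible P S F"
  shows "\<exists>g. (\<forall>k<sN P. 0 \<le> g k) \<and> ((\<forall>k<sN P. F k = Flam P l k) \<longrightarrow> (\<forall>k<sN P. g k = 0)) \<and>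
     qcost P (sQf P + l *\<^sub>R sQtf P) (\<lambda>k. sQ P k + l *\<^sub>R sQt P k) (\<lambda>k. sR P k + l *\<^sub>R sRt P k) S
     = trace (Xlam P l 0 ** (sV P + outer (sz P))) + (\<Sum>k<sN P. trace (Xlam P l (Suc k) ** sW P)) + (\<Sum>k<sN P. g k)"
proof -
  let ?N = "sN P"
  let ?A = "sA P" and ?B = "sB P"
  define Sig where "Sig k = (if k = 0 then sV P + outer (sz P) else AB ?A ?B ** S (k - 1) ** transpose (AB ?A ?B) + sW P)" for k
  define Mk where "Mk k = sR P k + l *\<^sub>R sRt P k + transpose ?B ** Xlam P l (Suc k) ** ?B" for k
  define g where "g k = trace (transpose (F k - Flam P l k) ** Mk k ** (F k - Flam P l k) ** Sig k)" for k
  have SigS: "Sig (Suc k) = AB ?A ?B ** S k ** transpose (AB ?A ?B) + sW P" for k by (simp add: Sig_def)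
  have Sk: "S k = IF (F k) ** Sig k ** transpose (IF (F k))" if "k < ?N" for k
  proof (cases k)
    case 0 then show ?thesis using feas by (simp add: dyn_feasible_def Sinit_def Sig_def)
  next
    case (Suc k') then show ?thesis using feas that by (simp add: dyn_feasible_def Phi_def Sig_def)
  qed
  have Sigpsd: "k \<le> ?N \<Longrightarrow> psd (Sig k)" for k
  proof (induction k)
    case 0 then show ?case using V by (simp add: Sig_def psd_add pd_psd psd_outer)
  next
    case (Suc k)
    then have "psd (S k)" using Sk[of k] psd_congr by simp
    then show ?case unfolding SigS using W by (simp add: psd_add pd_psd psd_congr)
  qed
  have Xpsd: "k \<le> ?N \<Longrightarrow> psd (Xlam P l k)" for k using Xlam_psd[OF hyp] by blast
  have step: "trace (bdiag (sQ P k + l *\<^sub>R sQt P k) (sR P k + l *\<^sub>R sRt P k) ** S k)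
      + trace (Xlam P l (Suc k) ** Sig (Suc k))
      = trace (Xlam P l k ** Sig k) + trace (Xlam P l (Suc k) ** sW P) + g k" if k: "k < ?N" for k
  proof -
    have X: "psd (Xlam P l (Suc k))" using Xpsd k by simp
    have Q: "psd (sQ P k + l *\<^sub>R sQt P k)" using hyp k by (simp add: psd_add psd_scale)
    have R: "pd (sR P k + l *\<^sub>R sRt P k)" using hyp k by simp
    have pdM: "pd (Mk k)" unfolding Mk_def by (rule ric_psd(1)[OF X Q R])
    have Minv: "invertible (Mk k)" using pd_invertible[OF pdM] .
    have Msym: "transpose (Mk k) = Mk k" using pdM unfolding pd_def by blast
    have Xsym: "transpose (Xlam P l (Suc k)) = Xlam P l (Suc k)" using X unfolding psd_def by blast
    have fl: "F k - - (matrix_inv (Mk k) ** transpose ?B ** Xlam P l (Suc k) ** ?A) = F k - Flam P l k"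
      by (simp add: Flam_def Mk_def)
    show ?thesis
      using step_identity[OF Xsym Minv[unfolded Mk_def] Msym[unfolded Mk_def], of "sQ P k + l *\<^sub>R sQt P k" "F k" "Sig k" ?A "sW P"]
      unfolding Sk[OF k] SigS Xlam_step[OF k] g_def Mk_def[symmetric] fl .
  qed
  have gnn: "0 \<le> g k" if k: "k < ?N" for k
  proof -
    have X: "psd (Xlam P l (Suc k))" using Xpsd k by simp
    have Q: "psd (sQ P k + l *\<^sub>R sQt P k)" using hyp k by (simp add: psd_add psd_scale)
    have R: "pd (sR P k + l *\<^sub>R sRt P k)" using hyp k by simp
    have pdM: "pd (Mk k)" unfolding Mk_def by (rule ric_psd(1)[OF X Q R])
    show ?thesis unfolding g_def
      by (rule trace_psd[OF psd_congrT[OF pd_psd[OF pdM]]]) (use Sigpsd k in simp)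
  qed
  have gz: "(\<forall>k<?N. F k = Flam P l k) \<longrightarrow> (\<forall>k<?N. g k = 0)"
    by (simp add: g_def transpose_zero trace_zero)
  let ?t = "\<lambda>k. trace (Xlam P l k ** Sig k)"
  let ?b = "\<lambda>k. trace (bdiag (sQ P k + l *\<^sub>R sQt P k) (sR P k + l *\<^sub>R sRt P k) ** S k)"
  let ?w = "\<lambda>k. trace (Xlam P l (Suc k) ** sW P)"
  have "(\<Sum>k<?N. ?b k + ?t (Suc k)) = (\<Sum>k<?N. ?t k + ?w k + g k)"
    using step by (intro sum.cong) auto
  then have that_eq: "(\<Sum>k<?N. ?b k) + (\<Sum>k<?N. ?t (Suc k) - ?t k) = (\<Sum>k<?N. ?w k) + (\<Sum>k<?N. g k)"
    by (simp add: sum.distrib sum_subtractf algebra_simps)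
  have sumeq: "(\<Sum>k<?N. ?b k) + ?t ?N = ?t 0 + (\<Sum>k<?N. ?w k) + (\<Sum>k<?N. g k)"
  proof -
    have "(\<Sum>k<?N. ?t (Suc k) - ?t k) = ?t ?N - ?t 0" by (rule sum_lessThan_telescope)
    with that_eq show ?thesis by linarith
  qed
  have "qcost P (sQf P + l *\<^sub>R sQtf P) (\<lambda>k. sQ P k + l *\<^sub>R sQt P k) (\<lambda>k. sR P k + l *\<^sub>R sRt P k) S
      = ?t ?N + (\<Sum>k<?N. ?b k)"
  proof -
    have "Sig ?N = AB ?A ?B ** S (?N - 1) ** transpose (AB ?A ?B) + sW P" using N by (simp add: Sig_def)
    then show ?thesis unfolding qcost_def Xlam_N by simp
  qed
  also have "\<dots> = trace (Xlam P l 0 ** (sV P + outer (sz P))) + (\<Sum>k<?N. ?w k) + (\<Sum>k<?N. g k)"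
    using sumeq by (simp add: Sig_def)
  finally show ?thesis using gnn gz by blast
qed

theorem proposition5:
  fixes P :: "('n::finite, 'm::finite) lqg" and l :: real
  assumes horizon: "0 < sN P"
    and Qf_psd: "psd (sQf P)" and Qtf_psd: "psd (sQtf P)"
    and Q_psd: "\<forall>k < sN P. psd (sQ P k)" and Qt_psd: "\<forall>k < sN P. psd (sQt P k)"
    and R_pd: "\<forall>k < sN P. \<forall>\<mu> > 0. pd (sR P k + \<mu> *\<^sub>R sRt P k)"
    and V_pd: "pd (sV P)" and W_pd: "pd (sW P)"
    and strict_feas: "\<exists>S F. dyn_feasible P S F \<and> Ccost P S < sgamma P"
    and unconstr_viol: "Ccost P (Slam P 0) > sgamma P"
    and in_Lambda: "l > 0" "Ccost P (Slam P l) = sgamma P"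
  shows "optimal P (Slam P l) (Flam P l)"
proof -
  let ?c = "trace (Xlam P l 0 ** (sV P + outer (sz P))) + (\<Sum>k<sN P. trace (Xlam P l (Suc k) ** sW P))"
  have lin: "qcost P (sQf P + l *\<^sub>R sQtf P) (\<lambda>k. sQ P k + l *\<^sub>R sQt P k) (\<lambda>k. sR P k + l *\<^sub>R sRt P k) S
     = Jp P S + l * Ccost P S" for S
    unfolding Jp_def Ccost_def by (rule qcost_lin)
  note cd = cost_decomp[OF horizon Qf_psd Qtf_psd Q_psd Qt_psd R_pd in_Lambda(1) V_pd W_pd]
  have feasL: "dyn_feasible P (Slam P l) (Flam P l)" by (rule dyn_feas_Slam)
  obtain g where g: "\<forall>k<sN P. g k = 0"
     "Jp P (Slam P l) + l * Ccost P (Slam P l) = ?c + (\<Sum>k<sN P. g k)"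
    using cd[OF feasL] unfolding lin by blast
  have JL: "Jp P (Slam P l) + l * sgamma P = ?c" using g in_Lambda(2) by simp
  show ?thesis unfolding optimal_def feasible_def
  proof (intro conjI allI impI)
    show "dyn_feasible P (Slam P l) (Flam P l)" by (rule feasL)
    show "Ccost P (Slam P l) \<le> sgamma P" using in_Lambda(2) by simp
    fix S' F' assume f': "dyn_feasible P S' F' \<and> Ccost P S' \<le> sgamma P"
    obtain g' where g': "\<forall>k<sN P. 0 \<le> g' k"
       "Jp P S' + l * Ccost P S' = ?c + (\<Sum>k<sN P. g' k)"
      using cd[of S' F'] f' unfolding lin by blast
    have "0 \<le> (\<Sum>k<sN P. g' k)" using g'(1) by (intro sum_nonneg) auto
    moreover have "l * Ccost P S' \<le> l * sgamma P" using f' in_Lambda(1) by simp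
    ultimately show "Jp P (Slam P l) \<le> Jp P S'" using JL g'(2) by linarith
  qed
qed

end
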